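(* For all $f,g\in C[0,1]$, $$ \left|\int_0^1 f(x)g(x)\,dx-\int_0^1f(x)\,dx\int_0^1g(x)\,dx\right|\le\frac14\,\widetilde{\omega}\left(f;\frac1{\sqrt3}\right)\widetilde{\omega}\left(g;\frac1{\sqrt3}\right), $$ and if moreover $f',g'\in L_\infty[0,1]$ then the left-hand side is at most $\frac1{12}\|f'\|_{L_\infty}\|g'\|_{L_\infty}$.
   Context: For $f\in C[0,1]$, $\omega(f;t)=\sup\{|f(x)-f(y)|:x,y\in[0,1],|x-y|\le t\}$ is the first-order modulus of continuity, and $\widetilde{\omega}(f;t)=\sup_{0\le x\le t\le y\le1,\,x\ne y}\frac{(t-x)\omega(f,y)+(y-t)\omega(f,x)}{y-x}$ for $0\le t\le1$, $\widetilde{\omega}(f;t)=\omega(f,1)$ for $t>1$ (its least concave majorant). *)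

theory Defs
  imports "HOL-Analysis.Analysis"
begin

definition modcont :: "(real \<Rightarrow> real) \<Rightarrow> real \<Rightarrow> real" where
  "modcont f t = Sup {\<bar>f x - f y\<bar> | x y. x \<in> {0..1} \<and> y \<in> {0..1} \<and> \<bar>x - y\<bar> \<le> t}"

text \<open>Least concave majorant of the modulus of continuity.\<close>
definition modcont_tilde :: "(real \<Rightarrow> real) \<Rightarrow> real \<Rightarrow> real" where
  "modcont_tilde f t =
     (if t > 1 then modcont f 1
      else Sup {((t - x) * modcont f y + (y - t) * modcont f x) / (y - x) | x y.
                  0 \<le> x \<and> x \<le> t \<and> t \<le> y \<and> y \<le> 1 \<and> x \<noteq> y})"

end

theory Submission
  imports Defs
begin

definition II :: "(real\<Rightarrow>real) \<Rightarrow> real" where "II u = integral {0..1} u"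
definition TT :: "(real\<Rightarrow>real) \<Rightarrow> (real\<Rightarrow>real) \<Rightarrow> real" where
  "TT u v = II (\<lambda>x. u x * v x) - II u * II v"

lemma int_c: "continuous_on {0..1} (u::real\<Rightarrow>real) \<Longrightarrow> u integrable_on {0..1::real}"
  by (metis integrable_continuous_real)

lemma II_add: "continuous_on {0..1} u \<Longrightarrow> continuous_on {0..1} v \<Longrightarrow> II (\<lambda>x. u x + v x) = II u + II v"
  unfolding II_def by (simp add: integral_add int_c)

lemma II_scale: "II (\<lambda>x. c * u x) = c * II u"
  unfolding II_def by simp

lemma II_const: "II (\<lambda>x. c) = c"
  unfolding II_def by simp

lemma TT_sym: "TT u v = TT v u"
  unfolding TT_def by (simp add: mult.commute)

lemma TT_lin:
  assumes u: "continuous_on {0..1} u" and v: "continuous_on {0..1} v" and w: "continuous_on {0..1} w"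
  shows "TT (\<lambda>x. u x + c * v x) w = TT u w + c * TT v w"
proof -
  have "II (\<lambda>x. (u x + c * v x) * w x) = II (\<lambda>x. u x * w x + c * (v x * w x))"
    by (simp add: algebra_simps)
  also have "\<dots> = II (\<lambda>x. u x * w x) + c * II (\<lambda>x. v x * w x)"
    by (subst II_add) (auto intro!: continuous_intros u v w simp: II_scale)
  finally have 1: "II (\<lambda>x. (u x + c * v x) * w x) = II (\<lambda>x. u x * w x) + c * II (\<lambda>x. v x * w x)" .
  have 2: "II (\<lambda>x. u x + c * v x) = II u + c * II v"
    by (subst II_add) (auto intro!: continuous_intros u v simp: II_scale)
  show ?thesis unfolding TT_def 1 2 by (simp add: algebra_simps)
qed

lemma TT_self:
  assumes u: "continuous_on {0..1} u"
  shows "TT u u = II (\<lambda>x. (u x - c)^2) - (II u - c)^2"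
proof -
  have "II (\<lambda>x. (u x - c)^2) = II (\<lambda>x. u x * u x + ((-2*c) * u x + c^2))"
    by (simp add: power2_eq_square algebra_simps)
  also have "\<dots> = II (\<lambda>x. u x * u x) + II (\<lambda>x. (-2*c) * u x + c^2)"
    by (rule II_add) (auto intro!: continuous_intros u)
  also have "II (\<lambda>x. (-2*c) * u x + c^2) = II (\<lambda>x. (-2*c) * u x) + II (\<lambda>x. c^2)"
    by (rule II_add) (auto intro!: continuous_intros u)
  finally show ?thesis unfolding TT_def II_scale II_const by (simp add: power2_eq_square algebra_simps)
qed

lemma II_nonneg: "continuous_on {0..1} h \<Longrightarrow> (\<And>x. x \<in> {0..1} \<Longrightarrow> 0 \<le> h x) \<Longrightarrow> 0 \<le> II h"
  unfolding II_def using integral_nonneg[of h "{0..1}"] int_c by blast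

lemma II_mono: "continuous_on {0..1} h \<Longrightarrow> continuous_on {0..1} k \<Longrightarrow> (\<And>x. x \<in> {0..1} \<Longrightarrow> h x \<le> k x) \<Longrightarrow> II h \<le> II k"
  unfolding II_def using integral_le[of h "{0..1}" k] int_c by blast

lemma TT_nonneg: "continuous_on {0..1} u \<Longrightarrow> 0 \<le> TT u u"
proof -
  assume u: "continuous_on {0..1} u"
  have "0 \<le> II (\<lambda>x. (u x - II u)^2)"
    by (rule II_nonneg) (auto intro!: continuous_intros u)
  then show ?thesis using TT_self[OF u, of "II u"] by simp
qed

lemma TT_bound:
  assumes u: "continuous_on {0..1} u" and h: "continuous_on {0..1} h"
    and le: "\<And>x. x \<in> {0..1} \<Longrightarrow> (u x - c)^2 \<le> h x"
  shows "TT u u \<le> II h"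
proof -
  have "II (\<lambda>x. (u x - c)^2) \<le> II h"
    by (rule II_mono[OF _ h le]) (auto intro!: continuous_intros u)
  moreover have "0 \<le> (II u - c)^2" by simp
  ultimately show ?thesis using TT_self[OF u, of c] by linarith
qed

lemma disc:
  fixes p q r :: real
  assumes "q \<ge> 0" "\<And>l. 0 \<le> p + 2*l*r + l^2*q"
  shows "r^2 \<le> p*q"
proof (cases "q > 0")
  case True
  have "0 \<le> p + 2*(-r/q)*r + (-r/q)^2*q" by (rule assms(2))
  also have "\<dots> = p - r^2/q" using True by (simp add: power2_eq_square field_simps)
  finally show ?thesis using True by (simp add: field_simps)
next
  case False
  then have q: "q = 0" using assms(1) by simp
  show ?thesis
  proof (cases "r = 0")
    case False
    have "0 \<le> p + 2*(-(p+1)/(2*r))*r + (-(p+1)/(2*r))^2*q" by (rule assms(2))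
    also have "\<dots> = -1" using False q by (simp add: field_simps)
    finally show ?thesis by simp
  qed (simp add: q)
qed

lemma TT_CS:
  assumes u: "continuous_on {0..1} u" and v: "continuous_on {0..1} v"
  shows "(TT u v)^2 \<le> TT u u * TT v v"
proof (rule disc)
  show "0 \<le> TT v v" by (rule TT_nonneg[OF v])
  fix l
  have c: "continuous_on {0..1} (\<lambda>x. u x + l * v x)" by (auto intro!: continuous_intros u v)
  have "TT (\<lambda>x. u x + l * v x) (\<lambda>x. u x + l * v x)
      = TT u (\<lambda>x. u x + l * v x) + l * TT v (\<lambda>x. u x + l * v x)"
    by (rule TT_lin[OF u v c])
  also have "TT u (\<lambda>x. u x + l * v x) = TT u u + l * TT u v"
    using TT_lin[OF u v u, of l] TT_sym[of u "\<lambda>x. u x + l * v x"] TT_sym[of v u] by simp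
  also have "TT v (\<lambda>x. u x + l * v x) = TT v u + l * TT v v"
    using TT_lin[OF u v v, of l] TT_sym[of v "\<lambda>x. u x + l * v x"] TT_sym[of v u] by simp
  finally have "TT (\<lambda>x. u x + l * v x) (\<lambda>x. u x + l * v x) = TT u u + 2 * l * TT u v + l^2 * TT v v"
    using TT_sym[of u v] by (simp add: power2_eq_square algebra_simps)
  then show "0 \<le> TT u u + 2 * l * TT u v + l^2 * TT v v" using TT_nonneg[OF c] by simp
qed

lemma sq_bound:
  fixes A B P Q r :: real
  assumes "0 \<le> A" "0 \<le> B" "0 \<le> P" "0 \<le> Q" "P \<le> A^2" "Q \<le> B^2" "r^2 \<le> P*Q"
  shows "\<bar>r\<bar> \<le> A*B"
proof -
  have "P*Q \<le> A^2*B^2" by (rule mult_mono) (use assms in auto)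
  moreover have "(A*B)^2 = A^2*B^2" by (rule power_mult_distrib)
  moreover have "\<bar>r\<bar>^2 = r^2" by (rule power2_abs)
  ultimately have "\<bar>r\<bar>^2 \<le> (A*B)^2" using assms(7) by linarith
  then show ?thesis by (rule power2_le_imp_le) (use assms(1,2) in simp)
qed

lemma int_sq: "II (\<lambda>x. (x - 1/2)^2) = 1/12"
proof -
  have "((\<lambda>x. (x - 1/2)^2) has_integral ((1 - 1/2)^3/3 - (0 - 1/2)^3/3)) {0..1::real}"
    by (rule fundamental_theorem_of_calculus[where f="\<lambda>x. (x - 1/2)^3/3"])
       (auto intro!: derivative_eq_intros simp: has_real_derivative_iff_has_vector_derivative[symmetric] power2_eq_square)
  then show ?thesis unfolding II_def by (simp add: integral_unique power3_eq_cube)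
qed

lemma Lip_TT:
  assumes r: "continuous_on {0..1} r"
    and L: "\<And>x y. x \<in> {0..1} \<Longrightarrow> y \<in> {0..1} \<Longrightarrow> \<bar>r x - r y\<bar> \<le> \<beta> * \<bar>x - y\<bar>"
  shows "TT r r \<le> \<beta>^2/12"
proof -
  have b: "0 \<le> \<beta>" using L[of 0 1] by simp
  have "TT r r \<le> II (\<lambda>x. \<beta>^2 * (x - 1/2)^2)"
  proof (rule TT_bound[OF r, of _ "r (1/2)"])
    show "continuous_on {0..1} (\<lambda>x. \<beta>^2 * (x - 1/2)^2)" by (auto intro!: continuous_intros)
    fix x :: real assume x: "x \<in> {0..1}"
    have "\<bar>r x - r (1/2)\<bar> \<le> \<bar>\<beta> * (x - 1/2)\<bar>" using L[OF x, of "1/2"] b by (simp add: abs_mult)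
    then show "(r x - r (1/2))^2 \<le> \<beta>^2 * (x - 1/2)^2"
      by (simp add: abs_le_square_iff power_mult_distrib)
  qed
  also have "\<dots> = \<beta>^2/12" by (simp add: II_scale int_sq)
  finally show ?thesis .
qed

lemma sq12: "(b/(2 * sqrt 3))^2 = (b::real)^2/12"
  by (simp add: power_divide power_mult_distrib)

lemma sqsum: "(a::real)^2 + 2 * (a * b) + b^2 = (a + b)^2"
  by (simp add: power2_eq_square algebra_simps)

lemma nearLip:
  assumes f: "continuous_on {0..1} f" and a: "0 \<le> \<alpha>" and b: "0 \<le> \<beta>"
    and H: "\<And>x y. x \<in> {0..1} \<Longrightarrow> y \<in> {0..1} \<Longrightarrow> \<bar>f x - f y\<bar> \<le> \<alpha> + \<beta> * \<bar>x - y\<bar>"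
  shows "TT f f \<le> (\<alpha>/2 + \<beta>/(2 * sqrt 3))^2"
proof -
  define r where "r x = Inf ((\<lambda>y. f y + \<beta> * \<bar>x - y\<bar>) ` {0..1})" for x
  have bdd: "bdd_below ((\<lambda>y. f y + \<beta> * \<bar>x - y\<bar>) ` {0..1})" if "x \<in> {0..1}" for x
  proof (rule bdd_belowI2)
    fix y :: real assume "y \<in> {0..1}"
    then show "f x - \<alpha> \<le> f y + \<beta> * \<bar>x - y\<bar>" using H[OF that, of y] by linarith
  qed
  have r_le: "r x \<le> f y + \<beta> * \<bar>x - y\<bar>" if "x \<in> {0..1}" "y \<in> {0..1}" for x y
    unfolding r_def by (rule cInf_lower) (use that bdd in auto)
  have r_ge: "f x - \<alpha> \<le> r x" if "x \<in> {0..1}" for x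
    unfolding r_def
  proof (rule cInf_greatest)
    show "(\<lambda>y. f y + \<beta> * \<bar>x - y\<bar>) ` {0..1} \<noteq> {}" by auto
    fix z assume "z \<in> (\<lambda>y. f y + \<beta> * \<bar>x - y\<bar>) ` {0..1}"
    then obtain y where y: "y \<in> {0..1}" "z = f y + \<beta> * \<bar>x - y\<bar>" by auto
    show "f x - \<alpha> \<le> z" using H[OF that y(1)] y(2) by linarith
  qed
  have r_lip1: "r x \<le> r x' + \<beta> * \<bar>x - x'\<bar>" if "x \<in> {0..1}" "x' \<in> {0..1}" for x x'
  proof -
    have "r x - \<beta> * \<bar>x - x'\<bar> \<le> r x'"
      unfolding r_def[of x']
    proof (rule cInf_greatest)
      show "(\<lambda>y. f y + \<beta> * \<bar>x' - y\<bar>) ` {0..1} \<noteq> {}" by auto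
      fix z assume "z \<in> (\<lambda>y. f y + \<beta> * \<bar>x' - y\<bar>) ` {0..1}"
      then obtain y where y: "y \<in> {0..1}" "z = f y + \<beta> * \<bar>x' - y\<bar>" by auto
      have "\<bar>x - y\<bar> \<le> \<bar>x - x'\<bar> + \<bar>x' - y\<bar>" by linarith
      then have "\<beta> * \<bar>x - y\<bar> \<le> \<beta> * \<bar>x - x'\<bar> + \<beta> * \<bar>x' - y\<bar>"
        using b by (metis distrib_left mult_left_mono)
      then show "r x - \<beta> * \<bar>x - x'\<bar> \<le> z" using r_le[OF that(1) y(1)] y(2) by linarith
    qed
    then show ?thesis by linarith
  qed
  have r_lip: "\<bar>r x - r y\<bar> \<le> \<beta> * \<bar>x - y\<bar>" if "x \<in> {0..1}" "y \<in> {0..1}" for x y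
  proof -
    have r1: "r x \<le> r y + \<beta> * \<bar>x - y\<bar>" by (rule r_lip1[OF that])
    have r2: "r y \<le> r x + \<beta> * \<bar>x - y\<bar>" using r_lip1[OF that(2,1)] unfolding abs_minus_commute[of y x] .
    show ?thesis unfolding abs_le_iff using r1 r2 by simp
  qed
  have rc: "continuous_on {0..1} r"
  proof (rule lipschitz_on_continuous_on)
    show "\<beta>-lipschitz_on {0..1} r"
      by (rule lipschitz_onI) (use r_lip b in \<open>auto simp: dist_real_def\<close>)
  qed
  define u where "u x = f x - r x" for x
  have uc: "continuous_on {0..1} u" unfolding u_def by (auto intro!: continuous_intros f rc)
  have Tu: "TT u u \<le> (\<alpha>/2)^2"
  proof -
    have "TT u u \<le> II (\<lambda>x. (\<alpha>/2)^2)"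
    proof (rule TT_bound[OF uc, of _ "\<alpha>/2"])
      fix x :: real assume x: "x \<in> {0..1}"
      have "\<bar>u x - \<alpha>/2\<bar> \<le> \<bar>\<alpha>/2\<bar>" using r_ge[OF x] r_le[OF x x] a unfolding u_def abs_le_iff by auto
      then show "(u x - \<alpha>/2)^2 \<le> (\<alpha>/2)^2" by (metis abs_le_square_iff)
    qed auto
    then show ?thesis by (simp add: II_const)
  qed
  have Tr: "TT r r \<le> (\<beta>/(2 * sqrt 3))^2"
    using Lip_TT[OF rc r_lip] unfolding sq12 .
  have Tur: "\<bar>TT u r\<bar> \<le> (\<alpha>/2) * (\<beta>/(2 * sqrt 3))"
    by (rule sq_bound[OF _ _ TT_nonneg[OF uc] TT_nonneg[OF rc] Tu Tr TT_CS[OF uc rc]]) (use a b in auto)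
  have fe: "f = (\<lambda>x. u x + 1 * r x)" by (simp add: u_def)
  have fc: "continuous_on {0..1} (\<lambda>x. u x + 1 * r x)" using f fe by simp
  have "TT f f = TT u (\<lambda>x. u x + 1 * r x) + TT r (\<lambda>x. u x + 1 * r x)"
    using TT_lin[OF uc rc fc, of 1] fe by simp
  also have "TT u (\<lambda>x. u x + 1 * r x) = TT u u + TT u r"
    using TT_lin[OF uc rc uc, of 1] TT_sym[of u "\<lambda>x. u x + 1 * r x"] TT_sym[of r u] by simp
  also have "TT r (\<lambda>x. u x + 1 * r x) = TT u r + TT r r"
    using TT_lin[OF uc rc rc, of 1] TT_sym[of r "\<lambda>x. u x + 1 * r x"] TT_sym[of r u] by simp
  finally have "TT f f = TT u u + 2 * TT u r + TT r r" by simp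
  also have "\<dots> \<le> (\<alpha>/2)^2 + 2 * ((\<alpha>/2) * (\<beta>/(2 * sqrt 3))) + (\<beta>/(2 * sqrt 3))^2"
    using Tu Tr Tur by linarith
  also have "\<dots> = (\<alpha>/2 + \<beta>/(2 * sqrt 3))^2" by (rule sqsum)
  finally show ?thesis .
qed


lemma modcont_props:
  fixes f :: "real \<Rightarrow> real"
  assumes f: "continuous_on {0..1} f"
  obtains M where
    "\<And>x y. x \<in> {0..1} \<Longrightarrow> y \<in> {0..1} \<Longrightarrow> \<bar>f x - f y\<bar> \<le> modcont f \<bar>x - y\<bar>"
    "\<And>t. 0 \<le> t \<Longrightarrow> 0 \<le> modcont f t"
    "\<And>t. 0 \<le> t \<Longrightarrow> modcont f t \<le> 2*M"
    "\<And>s t. 0 \<le> s \<Longrightarrow> s \<le> t \<Longrightarrow> modcont f s \<le> modcont f t"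
    "modcont f 0 = 0"
proof -
  have "compact (f ` {0..1})" by (rule compact_continuous_image[OF f]) simp
  then obtain M where M: "\<And>x. x \<in> {0..1} \<Longrightarrow> \<bar>f x\<bar> \<le> M"
    using compact_imp_bounded[of "f ` {0..1}"] unfolding bounded_iff real_norm_def by blast
  define W where "W t = {\<bar>f x - f y\<bar> | x y. x \<in> {0..1} \<and> y \<in> {0..1} \<and> \<bar>x - y\<bar> \<le> t}" for t
  have mW: "modcont f t = Sup (W t)" for t unfolding modcont_def W_def by simp
  have bdd: "bdd_above (W t)" for t
  proof (rule bdd_aboveI[of _ "2*M"])
    fix z assume "z \<in> W t"
    then obtain x y where "x \<in> {0..1}" "y \<in> {0..1}" "z = \<bar>f x - f y\<bar>" unfolding W_def by auto
    then show "z \<le> 2*M" using M[of x] M[of y] by linarith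
  qed
  have ne: "W t \<noteq> {}" if "0 \<le> t" for t
  proof -
    have "\<bar>f 0 - f 0\<bar> \<in> W t" unfolding W_def using that by force
    then show ?thesis by auto
  qed
  have zW: "0 \<in> W t" if "0 \<le> t" for t
  proof -
    have "\<bar>f 0 - f 0\<bar> \<in> W t" unfolding W_def using that by force
    then show ?thesis by simp
  qed
  show ?thesis
  proof
    fix x y :: real assume "x \<in> {0..1}" "y \<in> {0..1}"
    then have "\<bar>f x - f y\<bar> \<in> W \<bar>x - y\<bar>" unfolding W_def by force
    then show "\<bar>f x - f y\<bar> \<le> modcont f \<bar>x - y\<bar>" unfolding mW using bdd by (rule cSup_upper)
  next
    fix t :: real assume t: "0 \<le> t"
    show "0 \<le> modcont f t" unfolding mW using zW[OF t] bdd by (rule cSup_upper)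
    show "modcont f t \<le> 2*M" unfolding mW
    proof (rule cSup_least[OF ne[OF t]])
      fix z assume "z \<in> W t"
      then obtain x y where "x \<in> {0..1}" "y \<in> {0..1}" "z = \<bar>f x - f y\<bar>" unfolding W_def by auto
      then show "z \<le> 2*M" using M[of x] M[of y] by linarith
    qed
  next
    fix s t :: real assume st: "0 \<le> s" "s \<le> t"
    have "W s \<subseteq> W t" unfolding W_def using st by force
    then show "modcont f s \<le> modcont f t" unfolding mW by (rule cSup_subset_mono[OF ne[OF st(1)] bdd])
  next
    have "modcont f 0 \<le> 0" unfolding mW
    proof (rule cSup_least[OF ne])
      fix z assume "z \<in> W 0"
      then show "z \<le> 0" unfolding W_def by auto
    qed simp
    moreover have "0 \<le> modcont f 0" unfolding mW using zW[of 0] bdd by (intro cSup_upper) auto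
    ultimately show "modcont f 0 = 0" by simp
  qed
qed


lemma div_cross:
  fixes p q d e :: real
  assumes "0 < d" "0 < e" "p * e \<le> q * d"
  shows "p / d \<le> q / e"
proof -
  have "p * e / (d * e) \<le> q * d / (d * e)" by (rule divide_right_mono) (use assms in auto)
  then show ?thesis using assms by simp
qed

lemma chord_div:
  fixes wx wy a h x y :: real
  assumes "x < h" "h < y" "((h - x) * wy + (y - h) * wx) / (y - x) \<le> a"
  shows "(wy - a) / (y - h) \<le> (a - wx) / (h - x)"
proof -
  have "(h - x) * wy + (y - h) * wx \<le> a * (y - x)" using assms by (simp add: divide_le_eq)
  then have "(wy - a) * (h - x) \<le> (a - wx) * (y - h)" by (simp add: algebra_simps)
  then show ?thesis by (rule div_cross[rotated 2]) (use assms in auto)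
qed

lemma tilde_split:
  fixes f :: "real \<Rightarrow> real"
  assumes f: "continuous_on {0..1} f"
  shows "\<exists>\<alpha> \<beta>. 0 \<le> \<alpha> \<and> 0 \<le> \<beta> \<and> \<alpha> + \<beta> / sqrt 3 = modcont_tilde f (1 / sqrt 3)
     \<and> (\<forall>x\<in>{0..1}. \<forall>y\<in>{0..1}. \<bar>f x - f y\<bar> \<le> \<alpha> + \<beta> * \<bar>x - y\<bar>)"
proof -
  obtain M where w1: "\<And>x y. x \<in> {0..1} \<Longrightarrow> y \<in> {0..1} \<Longrightarrow> \<bar>f x - f y\<bar> \<le> modcont f \<bar>x - y\<bar>"
    and w2: "\<And>t. 0 \<le> t \<Longrightarrow> 0 \<le> modcont f t"
    and w3: "\<And>t. 0 \<le> t \<Longrightarrow> modcont f t \<le> 2*M"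
    and w4: "\<And>s t. 0 \<le> s \<Longrightarrow> s \<le> t \<Longrightarrow> modcont f s \<le> modcont f t"
    and w0: "modcont f 0 = 0"
    using modcont_props[OF f] by metis
  define w where "w = modcont f"
  define h :: real where "h = 1 / sqrt 3"
  have h0: "0 < h" unfolding h_def by simp
  have h1: "h < 1" unfolding h_def by (simp add: divide_less_eq)
  define S where "S = {((h - x) * w y + (y - h) * w x) / (y - x) | x y.
                  0 \<le> x \<and> x \<le> h \<and> h \<le> y \<and> y \<le> 1 \<and> x \<noteq> y}"
  define a where "a = modcont_tilde f h"
  have aS: "a = Sup S" unfolding a_def modcont_tilde_def S_def w_def using h1 by simp
  have bddS: "bdd_above S"
  proof (rule bdd_aboveI[of _ "2*M"])
    fix z assume "z \<in> S"
    then obtain x y where xy: "0 \<le> x" "x \<le> h" "h \<le> y" "y \<le> 1" "x \<noteq> y"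
      and z: "z = ((h - x) * w y + (y - h) * w x) / (y - x)" unfolding S_def by auto
    have yx: "0 < y - x" using xy by simp
    have "(h - x) * w y \<le> (h - x) * (2*M)" using xy w3[of y] unfolding w_def by (intro mult_left_mono) auto
    moreover have "(y - h) * w x \<le> (y - h) * (2*M)" using xy w3[of x] unfolding w_def by (intro mult_left_mono) auto
    ultimately have "(h - x) * w y + (y - h) * w x \<le> 2*M * (y - x)" by (simp add: algebra_simps)
    then show "z \<le> 2*M" unfolding z using yx by (simp add: divide_le_eq)
  qed
  have chord: "((h - x) * w y + (y - h) * w x) / (y - x) \<le> a"
    if "0 \<le> x" "x \<le> h" "h \<le> y" "y \<le> 1" "x \<noteq> y" for x y
    unfolding aS by (rule cSup_upper[OF _ bddS]) (use that in \<open>auto simp: S_def\<close>)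
  have wh: "w h \<le> a" using chord[of 0 h] h0 h1 by simp
  have w00: "w 0 = 0" unfolding w_def by (rule w0)
  have wy: "h * w y \<le> a * y" if "h < y" "y \<le> 1" for y
  proof -
    have "((h - 0) * w y + (y - h) * w 0) / (y - 0) \<le> a" using chord[of 0 y] that h0 by simp
    then show ?thesis using that h0 w00 by (simp add: divide_le_eq)
  qed
  have a0: "0 \<le> a" using wh w2[of h] h0 unfolding w_def by simp
  define Bs where "Bs = insert 0 {(w y - a) / (y - h) | y. h < y \<and> y \<le> 1}"
  define \<beta> where "\<beta> = Sup Bs"
  have Bbd: "z \<le> a / h" if "z \<in> Bs" for z
  proof -
    { fix y assume y: "h < y" "y \<le> 1"
      have "h * (w y - a) \<le> a * (y - h)" using wy[OF y] by (simp add: algebra_simps)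
      then have "(w y - a) / (y - h) \<le> a / h" using y h0 by (intro div_cross) (auto simp: algebra_simps) }
    then show ?thesis using that a0 h0 unfolding Bs_def by auto
  qed
  have bddB: "bdd_above Bs" using Bbd by (intro bdd_aboveI) auto
  have b0: "0 \<le> \<beta>" unfolding \<beta>_def by (rule cSup_upper[OF _ bddB]) (simp add: Bs_def)
  have bh: "\<beta> \<le> a / h" unfolding \<beta>_def by (rule cSup_least[OF _ Bbd]) (auto simp: Bs_def)
  have up: "w y \<le> a + \<beta> * (y - h)" if "h < y" "y \<le> 1" for y
  proof -
    have "(w y - a) / (y - h) \<le> \<beta>" unfolding \<beta>_def
      by (rule cSup_upper[OF _ bddB]) (use that in \<open>auto simp: Bs_def\<close>)
    then show ?thesis using that by (simp add: divide_le_eq algebra_simps)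
  qed
  have down: "w x \<le> a - \<beta> * (h - x)" if "0 \<le> x" "x < h" for x
  proof -
    have wxh: "w x \<le> w h" unfolding w_def using that by (intro w4) auto
    have "\<beta> \<le> (a - w x) / (h - x)" unfolding \<beta>_def
    proof (rule cSup_least)
      show "Bs \<noteq> {}" by (simp add: Bs_def)
      fix z assume "z \<in> Bs"
      then consider "z = 0" | y where "z = (w y - a) / (y - h)" "h < y" "y \<le> 1"
        unfolding Bs_def by auto
      then show "z \<le> (a - w x) / (h - x)"
      proof cases
        case 1 then show ?thesis using wxh wh that by simp
      next
        case 2
        have "((h - x) * w y + (y - h) * w x) / (y - x) \<le> a" using chord[of x y] that 2 by auto
        then have "(w y - a) / (y - h) \<le> (a - w x) / (h - x)" using that 2 by (intro chord_div) auto
        then show ?thesis using 2 by simp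
      qed
    qed
    then show ?thesis using that by (simp add: le_divide_eq algebra_simps)
  qed
  define \<alpha> where "\<alpha> = a - \<beta> * h"
  have al0: "0 \<le> \<alpha>" unfolding \<alpha>_def using bh h0 by (simp add: le_divide_eq mult.commute)
  have all: "w t \<le> \<alpha> + \<beta> * t" if "0 \<le> t" "t \<le> 1" for t
  proof -
    consider "t < h" | "t = h" | "h < t" by linarith
    then show ?thesis
    proof cases
      case 1 then show ?thesis using down[of t] that unfolding \<alpha>_def by (simp add: algebra_simps)
    next
      case 2 then show ?thesis using wh unfolding \<alpha>_def by simp
    next
      case 3 then show ?thesis using up[of t] that unfolding \<alpha>_def by (simp add: algebra_simps)
    qed
  qed
  show ?thesis
  proof (intro exI conjI ballI)
    show "0 \<le> \<alpha>" by (rule al0)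
    show "0 \<le> \<beta>" by (rule b0)
    show "\<alpha> + \<beta> / sqrt 3 = modcont_tilde f (1 / sqrt 3)"
      unfolding \<alpha>_def a_def h_def by simp
    fix x y :: real assume xy: "x \<in> {0..1}" "y \<in> {0..1}"
    have "\<bar>f x - f y\<bar> \<le> w \<bar>x - y\<bar>" using w1[OF xy] unfolding w_def .
    also have "\<dots> \<le> \<alpha> + \<beta> * \<bar>x - y\<bar>" using xy by (intro all) auto
    finally show "\<bar>f x - f y\<bar> \<le> \<alpha> + \<beta> * \<bar>x - y\<bar>" .
  qed
qed


lemma derivLip:
  fixes f f' :: "real \<Rightarrow> real"
  assumes I: "\<forall>x\<in>{0..1}. (f' has_integral (f x - f 0)) {0..x}"
    and N: "negligible N" and B: "\<forall>x\<in>{0..1} - N. \<bar>f' x\<bar> \<le> M"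
  shows "0 \<le> M \<and> (\<forall>x\<in>{0..1}. \<forall>y\<in>{0..1}. \<bar>f x - f y\<bar> \<le> 0 + M * \<bar>x - y\<bar>)"
proof -
  have "\<not> {0..1::real} \<subseteq> N"
  proof
    assume "{0..1::real} \<subseteq> N"
    then have "negligible {0..1::real}" using negligible_subset[OF N] by blast
    then have "box (0::real) 1 = {}" using negligible_interval(1)[of "0::real" 1] by (simp add: cbox_interval)
    moreover have "1/2 \<in> box (0::real) 1" by (simp add: box_real)
    ultimately show False by simp
  qed
  then obtain z where "z \<in> {0..1} - N" by blast
  then have M0: "0 \<le> M" using B by force
  have key: "\<bar>f y - f x\<bar> \<le> M * (y - x)" if xy: "0 \<le> x" "x \<le> y" "y \<le> 1" for x y
  proof -
    have Iy: "(f' has_integral (f y - f 0)) {0..y}" using I xy by auto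
    have Ix: "(f' has_integral (f x - f 0)) {0..x}" using I xy by auto
    have iy: "f' integrable_on {0..y}" using Iy by blast
    have "integral {0..x} f' + integral {x..y} f' = integral {0..y} f'"
      by (rule Henstock_Kurzweil_Integration.integral_combine[OF xy(1,2) iy])
    then have eq: "integral {x..y} f' = f y - f x"
      using integral_unique[OF Iy] integral_unique[OF Ix] by simp
    have ixy: "f' integrable_on {x..y}" by (rule integrable_subinterval_real[OF iy]) (use xy in auto)
    define g' where "g' t = (if t \<in> N then 0 else f' t)" for t
    have "(f' has_integral (f y - f x)) {x..y}" using integrable_integral[OF ixy] eq by simp
    then have "(g' has_integral (f y - f x)) {x..y}"
      using has_integral_spike_eq[OF N, where T="{x..y}" and g=g' and f=f'] by (simp add: g'_def)
    then have G: "(g' has_integral (f y - f x)) (cbox x y)" by (simp add: cbox_interval)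
    have gb: "norm (g' t) \<le> M" if t: "t \<in> cbox x y" for t
    proof (cases "t \<in> N")
      case True then show ?thesis using M0 by (simp add: g'_def)
    next
      case False then show ?thesis using B t xy by (auto simp: g'_def cbox_interval)
    qed
    note has_integral_bound[OF M0 G gb]
    then show ?thesis using xy by (simp add: cbox_interval)
  qed
  show ?thesis
  proof (intro conjI ballI M0)
    fix x y :: real assume xy: "x \<in> {0..1}" "y \<in> {0..1}"
    show "\<bar>f x - f y\<bar> \<le> 0 + M * \<bar>x - y\<bar>"
    proof (cases "x \<le> y")
      case True
      have "\<bar>f y - f x\<bar> \<le> M * (y - x)" using key[of x y] xy True by simp
      moreover have "\<bar>f x - f y\<bar> = \<bar>f y - f x\<bar>" by (rule abs_minus_commute)
      moreover have "\<bar>x - y\<bar> = y - x" using True by simp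
      ultimately show ?thesis by simp
    next
      case False
      have "\<bar>f x - f y\<bar> \<le> M * (x - y)" using key[of y x] xy False by simp
      moreover have "\<bar>x - y\<bar> = x - y" using False by simp
      ultimately show ?thesis by simp
    qed
  qed
qed

theorem mainTheorem8:
  fixes f g :: "real \<Rightarrow> real"
  assumes "continuous_on {0..1} f" and "continuous_on {0..1} g"
  shows "\<bar>integral {0..1} (\<lambda>x. f x * g x) - integral {0..1} f * integral {0..1} g\<bar>
           \<le> 1/4 * modcont_tilde f (1 / sqrt 3) * modcont_tilde g (1 / sqrt 3)
       \<and> (\<forall>(f' :: real \<Rightarrow> real) (g' :: real \<Rightarrow> real) (Mf :: real) (Mg :: real).
           (\<forall>x\<in>{0..1}. (f' has_integral (f x - f 0)) {0..x}) \<and>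
           (\<forall>x\<in>{0..1}. (g' has_integral (g x - g 0)) {0..x}) \<and>
           (\<exists>N. negligible N \<and> (\<forall>x\<in>{0..1} - N. \<bar>f' x\<bar> \<le> Mf)) \<and>
           (\<exists>N. negligible N \<and> (\<forall>x\<in>{0..1} - N. \<bar>g' x\<bar> \<le> Mg))
           \<longrightarrow> \<bar>integral {0..1} (\<lambda>x. f x * g x) - integral {0..1} f * integral {0..1} g\<bar>
                 \<le> 1/12 * Mf * Mg)"
proof -
  note fc = assms(1) and gc = assms(2)
  have lhs: "integral {0..1} (\<lambda>x. f x * g x) - integral {0..1} f * integral {0..1} g = TT f g"
    unfolding TT_def II_def ..
  have P1: "\<bar>TT f g\<bar> \<le> 1/4 * modcont_tilde f (1 / sqrt 3) * modcont_tilde g (1 / sqrt 3)"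
  proof -
    obtain \<alpha>f \<beta>f where af: "0 \<le> \<alpha>f" "0 \<le> \<beta>f" "\<alpha>f + \<beta>f / sqrt 3 = modcont_tilde f (1 / sqrt 3)"
      and Hf: "\<forall>x\<in>{0..1}. \<forall>y\<in>{0..1}. \<bar>f x - f y\<bar> \<le> \<alpha>f + \<beta>f * \<bar>x - y\<bar>"
      using tilde_split[OF fc] by blast
    obtain \<alpha>g \<beta>g where ag: "0 \<le> \<alpha>g" "0 \<le> \<beta>g" "\<alpha>g + \<beta>g / sqrt 3 = modcont_tilde g (1 / sqrt 3)"
      and Hg: "\<forall>x\<in>{0..1}. \<forall>y\<in>{0..1}. \<bar>g x - g y\<bar> \<le> \<alpha>g + \<beta>g * \<bar>x - y\<bar>"
      using tilde_split[OF gc] by blast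
    have e: "\<alpha>/2 + \<beta>/(2 * sqrt 3) = (\<alpha> + \<beta> / sqrt 3) / 2" for \<alpha> \<beta> :: real
      by (simp add: field_simps)
    have "TT f f \<le> (\<alpha>f/2 + \<beta>f/(2 * sqrt 3))^2"
      by (rule nearLip[OF fc af(1,2)]) (use Hf in blast)
    also have "\<dots> = (modcont_tilde f (1 / sqrt 3) / 2)^2" unfolding e af(3) ..
    finally have Tf: "TT f f \<le> (modcont_tilde f (1 / sqrt 3) / 2)^2" .
    have "TT g g \<le> (\<alpha>g/2 + \<beta>g/(2 * sqrt 3))^2"
      by (rule nearLip[OF gc ag(1,2)]) (use Hg in blast)
    also have "\<dots> = (modcont_tilde g (1 / sqrt 3) / 2)^2" unfolding e ag(3) ..
    finally have Tg: "TT g g \<le> (modcont_tilde g (1 / sqrt 3) / 2)^2" .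
    have "0 \<le> \<alpha>f + \<beta>f / sqrt 3" using af(1,2) by simp
    then have mf: "0 \<le> modcont_tilde f (1 / sqrt 3) / 2" unfolding af(3) by simp
    have "0 \<le> \<alpha>g + \<beta>g / sqrt 3" using ag(1,2) by simp
    then have mg: "0 \<le> modcont_tilde g (1 / sqrt 3) / 2" unfolding ag(3) by simp
    have "\<bar>TT f g\<bar> \<le> (modcont_tilde f (1 / sqrt 3) / 2) * (modcont_tilde g (1 / sqrt 3) / 2)"
      by (rule sq_bound[OF mf mg TT_nonneg[OF fc] TT_nonneg[OF gc] Tf Tg TT_CS[OF fc gc]])
    then show ?thesis by simp
  qed
  have P2: "\<bar>TT f g\<bar> \<le> 1/12 * Mf * Mg"
    if A: "\<forall>x\<in>{0..1}. (f' has_integral (f x - f 0)) {0..x}"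
       "\<forall>x\<in>{0..1}. (g' has_integral (g x - g 0)) {0..x}"
       "\<exists>N. negligible N \<and> (\<forall>x\<in>{0..1} - N. \<bar>f' x\<bar> \<le> Mf)"
       "\<exists>N. negligible N \<and> (\<forall>x\<in>{0..1} - N. \<bar>g' x\<bar> \<le> Mg)" for f' g' Mf Mg
  proof -
    obtain Nf where Nf: "negligible Nf" "\<forall>x\<in>{0..1} - Nf. \<bar>f' x\<bar> \<le> Mf" using A(3) by blast
    obtain Ng where Ng: "negligible Ng" "\<forall>x\<in>{0..1} - Ng. \<bar>g' x\<bar> \<le> Mg" using A(4) by blast
    have Lf: "0 \<le> Mf \<and> (\<forall>x\<in>{0..1}. \<forall>y\<in>{0..1}. \<bar>f x - f y\<bar> \<le> 0 + Mf * \<bar>x - y\<bar>)"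
      by (rule derivLip[OF A(1) Nf])
    have Lg: "0 \<le> Mg \<and> (\<forall>x\<in>{0..1}. \<forall>y\<in>{0..1}. \<bar>g x - g y\<bar> \<le> 0 + Mg * \<bar>x - y\<bar>)"
      by (rule derivLip[OF A(2) Ng])
    have "TT f f \<le> (0/2 + Mf / (2 * sqrt 3))^2"
      by (rule nearLip[OF fc order_refl]) (use Lf in blast)+
    then have Tf: "TT f f \<le> (Mf / (2 * sqrt 3))^2" by simp
    have "TT g g \<le> (0/2 + Mg / (2 * sqrt 3))^2"
      by (rule nearLip[OF gc order_refl]) (use Lg in blast)+
    then have Tg: "TT g g \<le> (Mg / (2 * sqrt 3))^2" by simp
    have "\<bar>TT f g\<bar> \<le> (Mf / (2 * sqrt 3)) * (Mg / (2 * sqrt 3))"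
      by (rule sq_bound[OF _ _ TT_nonneg[OF fc] TT_nonneg[OF gc] Tf Tg TT_CS[OF fc gc]])
         (use Lf Lg in simp)+
    also have "\<dots> = Mf * Mg / (4 * (sqrt 3 * sqrt 3))" by (simp add: mult_ac)
    also have "\<dots> = 1/12 * Mf * Mg" by simp
    finally show ?thesis .
  qed
  show ?thesis unfolding lhs
  proof (intro conjI allI impI)
    show "\<bar>TT f g\<bar> \<le> 1/4 * modcont_tilde f (1 / sqrt 3) * modcont_tilde g (1 / sqrt 3)" by (rule P1)
    fix f' g' :: "real \<Rightarrow> real" and Mf Mg :: real
    assume H: "(\<forall>x\<in>{0..1}. (f' has_integral (f x - f 0)) {0..x}) \<and>
           (\<forall>x\<in>{0..1}. (g' has_integral (g x - g 0)) {0..x}) \<and>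
           (\<exists>N. negligible N \<and> (\<forall>x\<in>{0..1} - N. \<bar>f' x\<bar> \<le> Mf)) \<and>
           (\<exists>N. negligible N \<and> (\<forall>x\<in>{0..1} - N. \<bar>g' x\<bar> \<le> Mg))"
    show "\<bar>TT f g\<bar> \<le> 1/12 * Mf * Mg"
      by (rule P2[OF conjunct1[OF H] conjunct1[OF conjunct2[OF H]] conjunct1[OF conjunct2[OF conjunct2[OF H]]] conjunct2[OF conjunct2[OF conjunct2[OF H]]]])
  qed
qed

end
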